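(* Let $G$ be a finite group with identity $e$ and $H$ a normal subgroup of $G$. Then $\Gamma_{G,H}$ admits a total perfect code if and only if one of the following holds: (1) $|H|=2$, and every $x\in G\setminus H$ with $x^2\in H$ is an involution; (2) there exist $n\ge 0$ and an isomorphism $G\cong\mathbb{Z}_2^n\times\mathbb{Z}_3$ mapping $H$ onto $\{0\}^n\times\mathbb{Z}_3=\{(0,\dots,0,0),(0,\dots,0,1),(0,\dots,0,2)\}$.
   Context: For a normal subgroup $H$ of a finite group $G$ with identity $e$, the subgroup sum graph $\Gamma_{G,H}$ is the simple undirected graph with vertex set $G$ in which distinct vertices $x,y$ are adjacent if and only if $xy\in H\setminus\{e\}$. A total perfect code in a graph is a set $C$ of vertices such that every vertex of the graph (whether in $C$ or not) has exactly one neighbour in $C$. An involution is an element of order exactly $2$. *)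

theory Defs
  imports "HOL-Algebra.Algebra"
begin

definition subgroup_sum_adj :: "('a, 'b) monoid_scheme \<Rightarrow> 'a set \<Rightarrow> 'a \<Rightarrow> 'a \<Rightarrow> bool" where
  "subgroup_sum_adj G H x y \<longleftrightarrow>
     x \<in> carrier G \<and> y \<in> carrier G \<and> x \<noteq> y \<and> x \<otimes>\<^bsub>G\<^esub> y \<in> H - {\<one>\<^bsub>G\<^esub>}"

definition subgroup_sum_total_perfect_code :: "('a, 'b) monoid_scheme \<Rightarrow> 'a set \<Rightarrow> 'a set \<Rightarrow> bool" where
  "subgroup_sum_total_perfect_code G H C \<longleftrightarrow>
     C \<subseteq> carrier G \<and> (\<forall>v \<in> carrier G. \<exists>!c. c \<in> C \<and> subgroup_sum_adj G H v c)"

definition involution :: "('a, 'b) monoid_scheme \<Rightarrow> 'a \<Rightarrow> bool" where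
  "involution G x \<longleftrightarrow> x \<in> carrier G \<and> group.ord G x = 2"

definition Z2n_Z3 :: "nat \<Rightarrow> ((nat \<Rightarrow> int) \<times> int) monoid" where
  "Z2n_Z3 n = product_group {..<n} (\<lambda>_. integer_mod_group 2) \<times>\<times> integer_mod_group 3"

end

theory Submission
  imports Defs
begin


lemma adj_iff:
  "subgroup_sum_adj G H v c \<longleftrightarrow> v \<in> carrier G \<and> c \<in> carrier G \<and> c \<noteq> v \<and> v \<otimes>\<^bsub>G\<^esub> c \<in> H \<and> v \<otimes>\<^bsub>G\<^esub> c \<noteq> \<one>\<^bsub>G\<^esub>"
  unfolding subgroup_sum_adj_def by auto

context group begin

lemma involutionI: "x \<in> carrier G \<Longrightarrow> x \<noteq> \<one> \<Longrightarrow> x \<otimes> x = \<one> \<Longrightarrow> involution G x"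
proof -
  assume x: "x \<in> carrier G" "x \<noteq> \<one>" "x \<otimes> x = \<one>"
  have "x [^] (2::nat) = \<one>" using x by (simp add: numeral_2_eq_2)
  then have d: "ord x dvd 2" using pow_eq_id x(1) by blast
  moreover have "ord x \<noteq> 1" using ord_eq_1 x by blast
  moreover have "ord x \<le> 2" using d by (simp add: dvd_imp_le)
  moreover have "ord x \<noteq> 0" using d by (metis dvd_0_left_iff zero_neq_numeral)
  ultimately have "ord x = 2" by arith
  then show ?thesis unfolding involution_def using x by simp
qed

lemma involutionD: "involution G x \<Longrightarrow> x \<otimes> x = \<one>"
proof -
  assume "involution G x"
  then have x: "x \<in> carrier G" "ord x = 2" unfolding involution_def by auto
  then have "x [^] (2::nat) = \<one>" using pow_eq_id by simp
  then show ?thesis using x by (simp add: numeral_2_eq_2)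
qed

lemma code_card2:
  assumes "H \<lhd> G" "card H = 2" "\<forall>x \<in> carrier G - H. x \<otimes> x \<in> H \<longrightarrow> involution G x"
  shows "subgroup_sum_total_perfect_code G H (carrier G)"
proof -
  interpret N: normal H G by fact
  have o: "\<one> \<in> H" by simp
  obtain p q where pq: "H = {p, q}" "p \<noteq> q" using assms(2) card_2_iff by metis
  obtain h where H: "H = {\<one>, h}" "h \<noteq> \<one>"
  proof (cases "p = \<one>")
    case True then show ?thesis using that pq by blast
  next
    case False then have "q = \<one>" using o pq by blast
    then show ?thesis using that pq by blast
  qed
  have hc: "h \<in> carrier G" using H N.subset by auto
  have hh: "h \<otimes> h = \<one>"
  proof -
    have "h \<in> H" using H(1) by simp
    then have "h \<otimes> h \<in> H" using N.m_closed by blast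
    moreover have "h \<otimes> h \<noteq> h" using hc H(2) by simp
    ultimately show ?thesis using H by blast
  qed
  show ?thesis unfolding subgroup_sum_total_perfect_code_def
  proof (intro conjI ballI)
    fix v assume v: "v \<in> carrier G"
    have ne: "inv v \<otimes> h \<noteq> v"
    proof
      assume "inv v \<otimes> h = v"
      then have vv: "v \<otimes> v = h" using v hc inv_solve_left' by metis
      show False
      proof (cases "v \<in> H")
        case True
        then have "v = \<one> \<or> v = h" using H by blast
        then show ?thesis
        proof
          assume "v = \<one>" then show ?thesis using vv H(2) by simp
        next
          assume "v = h" then show ?thesis using vv hh H(2) by simp
        qed
      next
        case False
        then have "involution G v" using assms(3) v vv H by auto
        then show ?thesis using involutionD vv H by auto
      qed
    qed
    show "\<exists>!c. c \<in> carrier G \<and> subgroup_sum_adj G H v c"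
    proof (rule ex1I[where a="inv v \<otimes> h"])
      have "v \<otimes> (inv v \<otimes> h) = h" using v hc by (simp add: m_assoc[symmetric])
      then show "inv v \<otimes> h \<in> carrier G \<and> subgroup_sum_adj G H v (inv v \<otimes> h)"
        using v hc ne H by (simp add: adj_iff)
    next
      fix c assume c: "c \<in> carrier G \<and> subgroup_sum_adj G H v c"
      then have "v \<otimes> c \<in> H - {\<one>}" by (simp add: adj_iff)
      then have "v \<otimes> c = h" using H by blast
      then show "c = inv v \<otimes> h" using v c hc inv_solve_left by blast
    qed
  qed simp
qed

end


lemma code_iso_transfer:
  assumes G: "group G" and G': "group G'" and phi: "\<phi> \<in> iso G G'" and HG: "H \<subseteq> carrier G"
    and code: "subgroup_sum_total_perfect_code G' (\<phi> ` H) C'"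
  shows "subgroup_sum_total_perfect_code G H {x \<in> carrier G. \<phi> x \<in> C'}"
proof -
  have hom: "\<phi> \<in> hom G G'" and bij: "bij_betw \<phi> (carrier G) (carrier G')"
    using phi by (auto simp: iso_def)
  have inj: "inj_on \<phi> (carrier G)" and surj: "\<phi> ` carrier G = carrier G'"
    using bij by (auto simp: bij_betw_def)
  have one: "\<phi> \<one>\<^bsub>G\<^esub> = \<one>\<^bsub>G'\<^esub>" using hom_one[OF hom G G'] .
  have adj: "subgroup_sum_adj G H v c \<longleftrightarrow> subgroup_sum_adj G' (\<phi> ` H) (\<phi> v) (\<phi> c)"
    if v: "v \<in> carrier G" and c: "c \<in> carrier G" for v c
  proof -
    have vc: "v \<otimes>\<^bsub>G\<^esub> c \<in> carrier G" using v c G by (simp add: group.is_monoid monoid.m_closed)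
    have m: "\<phi> (v \<otimes>\<^bsub>G\<^esub> c) = \<phi> v \<otimes>\<^bsub>G'\<^esub> \<phi> c" using hom v c by (simp add: hom_mult)
    have e1: "(\<phi> c = \<phi> v) \<longleftrightarrow> c = v" using inj v c by (auto dest: inj_onD)
    have e2: "(\<phi> (v \<otimes>\<^bsub>G\<^esub> c) \<in> \<phi> ` H) \<longleftrightarrow> v \<otimes>\<^bsub>G\<^esub> c \<in> H"
      using inj vc HG by (auto dest: inj_onD)
    have e3: "(\<phi> (v \<otimes>\<^bsub>G\<^esub> c) = \<one>\<^bsub>G'\<^esub>) \<longleftrightarrow> v \<otimes>\<^bsub>G\<^esub> c = \<one>\<^bsub>G\<^esub>"
      using inj vc one G by (metis group.is_monoid monoid.one_closed inj_onD)
    have "\<phi> v \<in> carrier G'" "\<phi> c \<in> carrier G'" using v c hom by (auto simp: hom_in_carrier)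
    then show ?thesis using v c e1 e2 e3 m by (auto simp: adj_iff)
  qed
  show ?thesis unfolding subgroup_sum_total_perfect_code_def
  proof (intro conjI ballI)
    fix v assume v: "v \<in> carrier G"
    then have "\<phi> v \<in> carrier G'" using hom by (simp add: hom_in_carrier)
    then obtain c' where c': "c' \<in> C'" "subgroup_sum_adj G' (\<phi> ` H) (\<phi> v) c'"
      and un: "\<And>d. d \<in> C' \<Longrightarrow> subgroup_sum_adj G' (\<phi> ` H) (\<phi> v) d \<Longrightarrow> d = c'"
      using code unfolding subgroup_sum_total_perfect_code_def by metis
    have "c' \<in> carrier G'" using c'(2) by (simp add: adj_iff)
    then obtain c where c: "c \<in> carrier G" "\<phi> c = c'" using surj by (metis imageE)
    show "\<exists>!c. c \<in> {x \<in> carrier G. \<phi> x \<in> C'} \<and> subgroup_sum_adj G H v c"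
    proof (rule ex1I[where a=c])
      show "c \<in> {x \<in> carrier G. \<phi> x \<in> C'} \<and> subgroup_sum_adj G H v c"
        using c c' adj v by auto
    next
      fix d assume d: "d \<in> {x \<in> carrier G. \<phi> x \<in> C'} \<and> subgroup_sum_adj G H v d"
      then have "\<phi> d = c'" using un adj v by auto
      then show "d = c" using c d inj by (auto dest: inj_onD)
    qed
  qed auto
qed

abbreviation "P2 n \<equiv> product_group {..<n} (\<lambda>_. integer_mod_group 2)"

lemma carrier_Z: "carrier (integer_mod_group 2) = {0,1}" "carrier (integer_mod_group 3) = {0,1,2}"
  by (auto simp: carrier_integer_mod_group)

lemma P2_one_iff:
  assumes "p \<in> carrier (P2 n)" "q \<in> carrier (P2 n)"
  shows "p \<otimes>\<^bsub>P2 n\<^esub> q = \<one>\<^bsub>P2 n\<^esub> \<longleftrightarrow> q = p"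
proof
  assume eq: "p \<otimes>\<^bsub>P2 n\<^esub> q = \<one>\<^bsub>P2 n\<^esub>"
  show "q = p"
  proof (rule PiE_ext[of _ "{..<n}" "\<lambda>_. {0,1::int}"])
    show "q \<in> (\<Pi>\<^sub>E i\<in>{..<n}. {0, 1})" "p \<in> (\<Pi>\<^sub>E i\<in>{..<n}. {0, 1})" using assms by (auto simp: carrier_Z)
    fix i assume i: "i \<in> {..<n}"
    have "(p i + q i) mod 2 = 0" using fun_cong[OF eq, of i] i by simp
    moreover have "p i \<in> {0,1}" "q i \<in> {0,1}" using assms i by (auto simp: carrier_Z PiE_iff)
    ultimately show "q i = p i" by auto
  qed
next
  assume "q = p"
  then show "p \<otimes>\<^bsub>P2 n\<^esub> q = \<one>\<^bsub>P2 n\<^esub>" using assms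
    by (auto simp: carrier_Z PiE_iff intro!: restrict_ext)
qed


lemma code_Z:
  "subgroup_sum_total_perfect_code (Z2n_Z3 n) ({\<one>\<^bsub>P2 n\<^esub>} \<times> carrier (integer_mod_group 3))
     (carrier (P2 n) \<times> {0,1})"
  unfolding subgroup_sum_total_perfect_code_def
proof (intro conjI ballI)
  show "carrier (P2 n) \<times> {0, 1} \<subseteq> carrier (Z2n_Z3 n)" by (auto simp: Z2n_Z3_def carrier_Z)
next
  fix v assume v: "v \<in> carrier (Z2n_Z3 n)"
  obtain p z where vpz: "v = (p, z)" by force
  have p: "p \<in> carrier (P2 n)" and z: "z \<in> {0,1,2}" using v vpz by (auto simp: Z2n_Z3_def carrier_Z)
  define w :: int where "w = (if z = 0 then 1 else 0)"
  have adjc: "subgroup_sum_adj (Z2n_Z3 n) ({\<one>\<^bsub>P2 n\<^esub>} \<times> carrier (integer_mod_group 3)) (p, z) (q, u)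
     \<longleftrightarrow> q = p \<and> u \<noteq> z \<and> (z + u) mod 3 \<noteq> 0" if q: "q \<in> carrier (P2 n)" and u: "u \<in> {0,1}" for q u
  proof -
    have m: "(p, z) \<otimes>\<^bsub>Z2n_Z3 n\<^esub> (q, u) = (p \<otimes>\<^bsub>P2 n\<^esub> q, (z + u) mod 3)"
      by (simp add: Z2n_Z3_def)
    have o: "\<one>\<^bsub>Z2n_Z3 n\<^esub> = (\<one>\<^bsub>P2 n\<^esub>, 0)" by (simp add: Z2n_Z3_def)
    have cz: "(p, z) \<in> carrier (Z2n_Z3 n)" "(q, u) \<in> carrier (Z2n_Z3 n)"
      using p q z u by (auto simp: Z2n_Z3_def carrier_Z)
    have r: "(z + u) mod 3 \<in> carrier (integer_mod_group 3)" unfolding carrier_Z(2) using pos_mod_bound[of 3 "z+u"] pos_mod_sign[of 3 "z+u"] by force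
    have "subgroup_sum_adj (Z2n_Z3 n) ({\<one>\<^bsub>P2 n\<^esub>} \<times> carrier (integer_mod_group 3)) (p, z) (q, u)
      \<longleftrightarrow> (q, u) \<noteq> (p, z) \<and> p \<otimes>\<^bsub>P2 n\<^esub> q = \<one>\<^bsub>P2 n\<^esub> \<and> \<not> (p \<otimes>\<^bsub>P2 n\<^esub> q = \<one>\<^bsub>P2 n\<^esub> \<and> (z + u) mod 3 = 0)"
      using cz r by (simp add: adj_iff m o)
    also have "\<dots> \<longleftrightarrow> q = p \<and> u \<noteq> z \<and> (z + u) mod 3 \<noteq> 0"
      using P2_one_iff[OF p q] by (auto simp: prod_eq_iff)
    finally show ?thesis .
  qed
  have w01: "w \<in> {0,1}" by (simp add: w_def)
  have wz: "w \<noteq> z \<and> (z + w) mod 3 \<noteq> 0" using z by (auto simp: w_def)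
  have wu: "u = w" if "u \<in> {0,1}" "u \<noteq> z" "(z + u) mod 3 \<noteq> 0" for u
    using z that by (auto simp: w_def)
  show "\<exists>!c. c \<in> carrier (P2 n) \<times> {0, 1} \<and> subgroup_sum_adj (Z2n_Z3 n) ({\<one>\<^bsub>P2 n\<^esub>} \<times> carrier (integer_mod_group 3)) v c"
  proof (rule ex1I[where a="(p, w)"])
    show "(p, w) \<in> carrier (P2 n) \<times> {0, 1} \<and> subgroup_sum_adj (Z2n_Z3 n) ({\<one>\<^bsub>P2 n\<^esub>} \<times> carrier (integer_mod_group 3)) v (p, w)"
    proof
      show "(p, w) \<in> carrier (P2 n) \<times> {0, 1}" using p w01 by blast
      show "subgroup_sum_adj (Z2n_Z3 n) ({\<one>\<^bsub>P2 n\<^esub>} \<times> carrier (integer_mod_group 3)) v (p, w)"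
        unfolding vpz using adjc[OF p w01] wz by blast
    qed
  next
    fix c assume c: "c \<in> carrier (P2 n) \<times> {0, 1} \<and> subgroup_sum_adj (Z2n_Z3 n) ({\<one>\<^bsub>P2 n\<^esub>} \<times> carrier (integer_mod_group 3)) v c"
    obtain q u where cqu: "c = (q, u)" by force
    have qu: "(q, u) \<in> carrier (P2 n) \<times> {0,1}" using c cqu by simp
    have q: "q \<in> carrier (P2 n)" and u: "u \<in> {0,1}" using qu by simp_all
    have "subgroup_sum_adj (Z2n_Z3 n) ({\<one>\<^bsub>P2 n\<^esub>} \<times> carrier (integer_mod_group 3)) (p, z) (q, u)"
      using conjunct2[OF c] unfolding cqu vpz .
    then have "q = p \<and> u \<noteq> z \<and> (z + u) mod 3 \<noteq> 0" by (rule iffD1[OF adjc[OF q u]])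
    then show "c = (p, w)" using cqu wu u by blast
  qed
qed



definition bsel :: "('a,'b) monoid_scheme \<Rightarrow> (nat \<Rightarrow> 'a) \<Rightarrow> (nat \<Rightarrow> int) \<Rightarrow> nat \<Rightarrow> 'a" where
  "bsel G b p i = (if p i = 0 then \<one>\<^bsub>G\<^esub> else b i)"

definition bprod :: "('a,'b) monoid_scheme \<Rightarrow> nat \<Rightarrow> (nat \<Rightarrow> 'a) \<Rightarrow> (nat \<Rightarrow> int) \<Rightarrow> 'a" where
  "bprod G n b p = finprod G (bsel G b p) {..<n}"

definition Eset :: "('a,'b) monoid_scheme \<Rightarrow> 'a set" where
  "Eset G = {u \<in> carrier G. u \<otimes>\<^bsub>G\<^esub> u = \<one>\<^bsub>G\<^esub>}"

lemma P2_mem: "p \<in> carrier (P2 n) \<Longrightarrow> i < n \<Longrightarrow> p i \<in> {0,1}"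
  by (auto simp: carrier_Z PiE_iff)

lemma P2_mult_app: "i < n \<Longrightarrow> (p \<otimes>\<^bsub>P2 n\<^esub> q) i = (p i + q i) mod 2"
  by simp

context comm_group begin

lemma bsel_closed: "(\<forall>i<n. b i \<in> carrier G) \<Longrightarrow> bsel G b p \<in> {..<n} \<rightarrow> carrier G"
  by (auto simp: bsel_def)

lemma bprod_closed: "(\<forall>i<n. b i \<in> carrier G) \<Longrightarrow> bprod G n b p \<in> carrier G"
  unfolding bprod_def using bsel_closed by (intro finprod_closed) auto

lemma bprod_mult:
  assumes b: "\<forall>i<n. b i \<in> Eset G" and p: "p \<in> carrier (P2 n)" and q: "q \<in> carrier (P2 n)"
  shows "bprod G n b (p \<otimes>\<^bsub>P2 n\<^esub> q) = bprod G n b p \<otimes> bprod G n b q"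
proof -
  have bc: "\<forall>i<n. b i \<in> carrier G" using b by (auto simp: Eset_def)
  have "bprod G n b (p \<otimes>\<^bsub>P2 n\<^esub> q) = finprod G (\<lambda>i. bsel G b p i \<otimes> bsel G b q i) {..<n}"
    unfolding bprod_def
  proof (rule finprod_cong')
    show "(\<lambda>i. bsel G b p i \<otimes> bsel G b q i) \<in> {..<n} \<rightarrow> carrier G"
      using bc by (auto simp: bsel_def)
    fix i assume i: "i \<in> {..<n}"
    then have pi: "p i \<in> {0,1}" and qi: "q i \<in> {0,1}" using P2_mem p q by auto
    have bi: "b i \<otimes> b i = \<one>" "b i \<in> carrier G" using b i by (auto simp: Eset_def)
    have e: "(p \<otimes>\<^bsub>P2 n\<^esub> q) i = (p i + q i) mod 2" using i by simp
    show "bsel G b (p \<otimes>\<^bsub>P2 n\<^esub> q) i = bsel G b p i \<otimes> bsel G b q i"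
      unfolding bsel_def e using pi qi bi by auto
  qed simp
  also have "\<dots> = bprod G n b p \<otimes> bprod G n b q"
    unfolding bprod_def by (rule finprod_multf[OF bsel_closed[OF bc] bsel_closed[OF bc]])
  finally show ?thesis .
qed

lemma bprod_one: "bprod G n b \<one>\<^bsub>P2 n\<^esub> = \<one>"
  unfolding bprod_def by (rule finprod_one_eqI) (simp add: bsel_def)

lemma bprod_E:
  assumes b: "\<forall>i<n. b i \<in> Eset G" and p: "p \<in> carrier (P2 n)"
  shows "bprod G n b p \<in> Eset G"
proof -
  have bc: "\<forall>i<n. b i \<in> carrier G" using b by (auto simp: Eset_def)
  have "p \<otimes>\<^bsub>P2 n\<^esub> p = \<one>\<^bsub>P2 n\<^esub>" using P2_one_iff[OF p p] by simp
  then have "bprod G n b p \<otimes> bprod G n b p = \<one>"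
    using bprod_mult[OF b p p] bprod_one by simp
  then show ?thesis using bprod_closed[OF bc] by (simp add: Eset_def)
qed

lemma bprod_Suc:
  assumes bc: "\<forall>i<Suc n. b i \<in> carrier G"
  shows "bprod G (Suc n) b p = bprod G n b (restrict p {..<n}) \<otimes> bsel G b p n"
proof -
  have "bprod G (Suc n) b p = bsel G b p n \<otimes> finprod G (bsel G b p) {..<n}"
    unfolding bprod_def lessThan_Suc using bc
    by (intro finprod_insert) (auto simp: bsel_def)
  also have "finprod G (bsel G b p) {..<n} = bprod G n b (restrict p {..<n})"
    unfolding bprod_def using bc by (intro finprod_cong') (auto simp: bsel_def)
  finally show ?thesis using bc bprod_closed[of n b] by (simp add: m_comm bsel_def)
qed

lemma bprod_upd: "\<forall>i<n. b i \<in> carrier G \<Longrightarrow> bprod G n (b(n := g)) p = bprod G n b p"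
  unfolding bprod_def by (intro finprod_cong') (auto simp: bsel_def)

end


lemma P2_restrict: "p \<in> carrier (P2 (Suc n)) \<Longrightarrow> restrict p {..<n} \<in> carrier (P2 n)"
  by (auto simp: PiE_iff)

lemma card_P2: "card (carrier (P2 n)) = 2 ^ n"
  apply (simp add: card_PiE carrier_Z)
  by (metis numeral_2_eq_2)

lemma P2_ext:
  assumes "p \<in> carrier (P2 (Suc n))" "q \<in> carrier (P2 (Suc n))"
    "restrict p {..<n} = restrict q {..<n}" "p n = q n"
  shows "p = q"
proof (rule PiE_ext[of p "{..<Suc n}" "\<lambda>_. carrier (integer_mod_group 2)" q])
  show "p \<in> (\<Pi>\<^sub>E i\<in>{..<Suc n}. carrier (integer_mod_group 2))"
       "q \<in> (\<Pi>\<^sub>E i\<in>{..<Suc n}. carrier (integer_mod_group 2))" using assms by auto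
  fix i assume "i \<in> {..<Suc n}"
  then have "i < n \<or> i = n" by auto
  then show "p i = q i"
  proof
    assume "i < n" then show ?thesis using fun_cong[OF assms(3), of i] by simp
  qed (use assms in simp)
qed

lemma P2_group: "group (P2 n)" by simp

lemma P2_closed: "p \<in> carrier (P2 n) \<Longrightarrow> q \<in> carrier (P2 n) \<Longrightarrow> p \<otimes>\<^bsub>P2 n\<^esub> q \<in> carrier (P2 n)"
  by (rule monoid.m_closed[OF group.is_monoid[OF P2_group]])

context comm_group begin

lemma basis_exists:
  assumes fin: "finite (carrier G)"
  shows "\<exists>n b. (\<forall>i<n. b i \<in> Eset G) \<and> bij_betw (bprod G n b) (carrier (P2 n)) (Eset G)"
proof -
  define good where "good n \<longleftrightarrow> (\<exists>b. (\<forall>i<n. b i \<in> Eset G) \<and> inj_on (bprod G n b) (carrier (P2 n)))" for n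
  have good0: "good 0"
  proof -
    have "carrier (P2 (0::nat)) = {\<lambda>_. undefined}" by simp
    then have "inj_on (bprod G 0 (\<lambda>_. \<one>)) (carrier (P2 0))" by simp
    moreover have "\<forall>i<(0::nat). (\<lambda>_. \<one>) i \<in> Eset G" by simp
    ultimately show ?thesis unfolding good_def by blast
  qed
  have ES: "Eset G \<subseteq> carrier G" by (auto simp: Eset_def)
  have bound: "n \<le> card (carrier G)" if gn: "good n" for n
  proof -
    obtain b where b: "\<forall>i<n. b i \<in> Eset G" "inj_on (bprod G n b) (carrier (P2 n))"
      using gn unfolding good_def by blast
    have "bprod G n b ` carrier (P2 n) \<subseteq> carrier G" using bprod_E[OF b(1)] ES by blast
    then have "card (carrier (P2 n)) \<le> card (carrier G)"
      using card_inj_on_le[OF b(2) _ fin] by blast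
    then have "2 ^ n \<le> card (carrier G)" by (metis card_P2)
    moreover have "n < 2 ^ n" by (rule less_exp)
    ultimately show ?thesis by linarith
  qed
  define N where "N = (GREATEST n. good n)"
  have gN: "good N" unfolding N_def using good0 bound by (rule GreatestI_nat)
  have leN: "m \<le> N" if "good m" for m unfolding N_def using that bound by (rule Greatest_le_nat)
  obtain b where b: "\<forall>i<N. b i \<in> Eset G" "inj_on (bprod G N b) (carrier (P2 N))"
    using gN unfolding good_def by blast
  have bc: "\<forall>i<N. b i \<in> carrier G" using b(1) ES by blast
  have surj: "Eset G \<subseteq> bprod G N b ` carrier (P2 N)"
  proof
    fix g assume g: "g \<in> Eset G"
    show "g \<in> bprod G N b ` carrier (P2 N)"
    proof (rule ccontr)
      assume gn: "g \<notin> bprod G N b ` carrier (P2 N)"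
      define b' where "b' = b(N := g)"
      have b'E: "\<forall>i<Suc N. b' i \<in> Eset G" using b(1) g by (auto simp: b'_def less_Suc_eq)
      have b'c: "\<forall>i<Suc N. b' i \<in> carrier G" using b'E ES by blast
      have gc: "g \<in> carrier G" "g \<otimes> g = \<one>" using g by (auto simp: Eset_def)
      have dec: "bprod G (Suc N) b' p = bprod G N b (restrict p {..<N}) \<otimes> (if p N = 0 then \<one> else g)" for p
      proof -
        have "bprod G (Suc N) b' p = bprod G N b' (restrict p {..<N}) \<otimes> bsel G b' p N"
          by (rule bprod_Suc[OF b'c])
        also have "bprod G N b' (restrict p {..<N}) = bprod G N b (restrict p {..<N})"
          unfolding b'_def by (rule bprod_upd[OF bc])
        also have "bsel G b' p N = (if p N = 0 then \<one> else g)" by (simp add: bsel_def b'_def)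
        finally show ?thesis .
      qed
      have cross: False if p: "p \<in> carrier (P2 (Suc N))" and q: "q \<in> carrier (P2 (Suc N))"
        and eq: "bprod G N b (restrict p {..<N}) \<otimes> g = bprod G N b (restrict q {..<N})" for p q
      proof -
        define Xa where "Xa = bprod G N b (restrict p {..<N})"
        define Ya where "Ya = bprod G N b (restrict q {..<N})"
        have pr: "restrict p {..<N} \<in> carrier (P2 N)" "restrict q {..<N} \<in> carrier (P2 N)"
          using p q P2_restrict by auto
        have XE: "Xa \<in> Eset G" "Ya \<in> Eset G" unfolding Xa_def Ya_def using bprod_E[OF b(1)] pr by auto
        then have Xc: "Xa \<in> carrier G" "Ya \<in> carrier G" "Xa \<otimes> Xa = \<one>" by (auto simp: Eset_def)
        have "Xa \<otimes> g = Ya" using eq Xa_def Ya_def by simp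
        then have "Xa \<otimes> (Xa \<otimes> g) = Xa \<otimes> Ya" by simp
        then have "g = Xa \<otimes> Ya" using Xc gc by (simp add: m_assoc[symmetric])
        also have "\<dots> = bprod G N b (restrict p {..<N} \<otimes>\<^bsub>P2 N\<^esub> restrict q {..<N})"
          unfolding Xa_def Ya_def using bprod_mult[OF b(1) pr] by simp
        finally have "g \<in> bprod G N b ` carrier (P2 N)"
          using P2_closed[OF pr] by blast
        then show False using gn by blast
      qed
      have "inj_on (bprod G (Suc N) b') (carrier (P2 (Suc N)))"
      proof (rule inj_onI)
        fix p q assume p: "p \<in> carrier (P2 (Suc N))" and q: "q \<in> carrier (P2 (Suc N))"
          and eq: "bprod G (Suc N) b' p = bprod G (Suc N) b' q"
        have pr: "restrict p {..<N} \<in> carrier (P2 N)" "restrict q {..<N} \<in> carrier (P2 N)"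
          using p q P2_restrict by auto
        have Xc: "bprod G N b (restrict p {..<N}) \<in> carrier G" "bprod G N b (restrict q {..<N}) \<in> carrier G"
          using bprod_closed[OF bc] by auto
        have pN: "p N \<in> {0,1}" "q N \<in> {0,1}" using P2_mem p q by auto
        have eq2: "bprod G N b (restrict p {..<N}) \<otimes> (if p N = 0 then \<one> else g)
             = bprod G N b (restrict q {..<N}) \<otimes> (if q N = 0 then \<one> else g)"
          using eq dec by simp
        show "p = q"
        proof (cases "p N = q N")
          case True
          then have "bprod G N b (restrict p {..<N}) = bprod G N b (restrict q {..<N})"
            using eq2 Xc gc by (cases "q N = 0") simp_all
          then have "restrict p {..<N} = restrict q {..<N}" using inj_onD[OF b(2) _ pr] by blast
          then show ?thesis using P2_ext[OF p q] True by blast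
        next
          case False
          then have "(p N = 1 \<and> q N = 0) \<or> (p N = 0 \<and> q N = 1)" using pN by auto
          then show ?thesis
          proof
            assume "p N = 1 \<and> q N = 0"
            then have "bprod G N b (restrict p {..<N}) \<otimes> g = bprod G N b (restrict q {..<N})"
              using eq2 Xc by simp
            then show ?thesis using cross[OF p q] by blast
          next
            assume "p N = 0 \<and> q N = 1"
            then have "bprod G N b (restrict q {..<N}) \<otimes> g = bprod G N b (restrict p {..<N})"
              using eq2 Xc by simp
            then show ?thesis using cross[OF q p] by blast
          qed
        qed
      qed
      then have "good (Suc N)" unfolding good_def using b'E by blast
      then have "Suc N \<le> N" by (rule leN)
      then show False by simp
    qed
  qed
  have "bprod G N b ` carrier (P2 N) \<subseteq> Eset G" using bprod_E[OF b(1)] by (rule image_subsetI)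
  then have "bprod G N b ` carrier (P2 N) = Eset G" using surj by (rule subset_antisym)
  then have "bij_betw (bprod G N b) (carrier (P2 N)) (Eset G)" using b(2) unfolding bij_betw_def by (rule conjI[rotated])
  then show ?thesis using b(1) by blast
qed

end


locale codeloc = group G for G (structure) +
  fixes H C
  assumes nrm: "H \<lhd> G" and code: "subgroup_sum_total_perfect_code G H C"
begin

lemma sub: "subgroup H G" using nrm by (rule normal_imp_subgroup)
lemma hc: "x \<in> H \<Longrightarrow> x \<in> carrier G" using sub by (rule subgroup.mem_carrier)
lemma hm: "x \<in> H \<Longrightarrow> y \<in> H \<Longrightarrow> x \<otimes> y \<in> H" using sub by (rule subgroup.m_closed)
lemma hi: "x \<in> H \<Longrightarrow> inv x \<in> H" using sub by (rule subgroup.m_inv_closed)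
lemma h1: "\<one> \<in> H" using sub by (rule subgroup.one_closed)
lemma conj2: "x \<in> carrier G \<Longrightarrow> h \<in> H \<Longrightarrow> x \<otimes> h \<otimes> inv x \<in> H"
  using nrm by (rule normal.inv_op_closed2)
lemma conj1: "x \<in> carrier G \<Longrightarrow> h \<in> H \<Longrightarrow> inv x \<otimes> h \<otimes> x \<in> H"
  using nrm by (rule normal.inv_op_closed1)
lemma Csub: "C \<subseteq> carrier G" using code by (simp add: subgroup_sum_total_perfect_code_def)

lemma code_ex: "v \<in> carrier G \<Longrightarrow> \<exists>c. c \<in> C \<and> subgroup_sum_adj G H v c"
  using code unfolding subgroup_sum_total_perfect_code_def by blast

lemma code_un: "v \<in> carrier G \<Longrightarrow> c \<in> C \<Longrightarrow> d \<in> C \<Longrightarrow> subgroup_sum_adj G H v c \<Longrightarrow> subgroup_sum_adj G H v d \<Longrightarrow> c = d"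
  using code unfolding subgroup_sum_total_perfect_code_def by blast

lemma adj_form:
  assumes "subgroup_sum_adj G H v c"
  obtains h where "h \<in> H" "h \<noteq> \<one>" "c = inv v \<otimes> h" "v \<in> carrier G" "c \<in> carrier G" "c \<noteq> v"
proof -
  have v: "v \<in> carrier G" "c \<in> carrier G" "c \<noteq> v" "v \<otimes> c \<in> H" "v \<otimes> c \<noteq> \<one>"
    using assms by (auto simp: adj_iff)
  have "c = inv v \<otimes> (v \<otimes> c)" using v by (simp add: m_assoc[symmetric])
  then show ?thesis using that v by blast
qed

lemma adj_intro:
  assumes "v \<in> carrier G" "h \<in> H" "h \<noteq> \<one>" "inv v \<otimes> h \<noteq> v"
  shows "subgroup_sum_adj G H v (inv v \<otimes> h)"
proof -
  have hc': "h \<in> carrier G" using assms(2) by (rule hc)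
  have "v \<otimes> (inv v \<otimes> h) = h" using assms(1) hc' by (simp add: m_assoc[symmetric])
  then show ?thesis using assms hc' by (simp add: adj_iff)
qed

lemma adj_H: "subgroup_sum_adj G H v c \<Longrightarrow> v \<otimes> c \<in> H - {\<one>}"
  by (simp add: adj_iff)

end



context codeloc begin

lemma card2_nec:
  assumes c2: "card H = 2"
  shows "\<forall>x \<in> carrier G - H. x \<otimes> x \<in> H \<longrightarrow> involution G x"
proof (intro ballI impI)
  fix x assume x: "x \<in> carrier G - H" and xx: "x \<otimes> x \<in> H"
  have xc: "x \<in> carrier G" and xH: "x \<notin> H" using x by auto
  show "involution G x"
  proof (cases "x \<otimes> x = \<one>")
    case True
    have "x \<noteq> \<one>" using xH h1 by blast
    then show ?thesis using involutionI xc True by blast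
  next
    case False
    obtain c where c: "c \<in> C" "subgroup_sum_adj G H x c" using code_ex[OF xc] by blast
    have cc: "c \<in> carrier G" "c \<noteq> x" "x \<otimes> c \<in> H - {\<one>}" using c(2) by (auto simp: adj_iff)
    have "card (H - {\<one>}) = 1" using c2 h1 by (simp add: card_Diff_singleton)
    then obtain t where t: "H - {\<one>} = {t}" by (rule card_1_singletonE)
    have "x \<otimes> x \<in> H - {\<one>}" using xx False by blast
    then have e1: "x \<otimes> x = t" unfolding t by simp
    have e2: "x \<otimes> c = t" using cc(3) unfolding t by simp
    have "x \<otimes> c = x \<otimes> x" using trans[OF e2 e1[symmetric]] .
    then have "c = x" using cc(1) xc xc by (rule l_cancel)
    then show ?thesis using cc(2) by blast
  qed
qed

end

lemma (in group) cancL: "x \<in> carrier G \<Longrightarrow> y \<in> carrier G \<Longrightarrow> x \<otimes> (inv x \<otimes> y) = y"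
  by (simp add: m_assoc[symmetric])
lemma (in group) cancL': "x \<in> carrier G \<Longrightarrow> y \<in> carrier G \<Longrightarrow> inv x \<otimes> (x \<otimes> y) = y"
  by (simp add: m_assoc[symmetric])

lemma two_elems:
  assumes "finite A" "2 \<le> card A"
  obtains p q where "p \<in> A" "q \<in> A" "p \<noteq> q"
proof -
  have "\<not> card A \<le> Suc 0" using assms(2) by simp
  then have "\<not> (\<forall>a1 \<in> A. \<forall>a2 \<in> A. a1 = a2)" using card_le_Suc0_iff_eq[OF assms(1)] by blast
  then show ?thesis using that by blast
qed

context codeloc begin

lemma Hfin: "finite (carrier G) \<Longrightarrow> finite H"
  using hc by (meson finite_subset subsetI)

lemma sq_in_H:
  assumes fin: "finite (carrier G)" and c3: "3 \<le> card H" and xc: "x \<in> carrier G"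
  shows "x \<otimes> x \<in> H"
proof (rule ccontr)
  assume nx: "x \<otimes> x \<notin> H"
  define y where "y = inv x"
  have yc: "y \<in> carrier G" using xc y_def by simp
  have Lnv: "y \<otimes> k' \<noteq> inv (y \<otimes> k)" if k: "k \<in> H" "k' \<in> H" for k k'
  proof
    assume eq: "y \<otimes> k' = inv (y \<otimes> k)"
    have kc: "k \<in> carrier G" "k' \<in> carrier G" using k hc by auto
    have "(y \<otimes> k \<otimes> y) \<otimes> k' = (y \<otimes> k) \<otimes> (y \<otimes> k')" using kc yc by (simp add: m_assoc)
    also have "\<dots> = \<one>" unfolding eq using kc yc by simp
    finally have "inv k' = y \<otimes> k \<otimes> y" using kc yc by (intro inv_equality) auto
    then have A: "y \<otimes> k \<otimes> y \<in> H" using hi[OF k(2)] by simp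
    have B: "inv y \<otimes> inv k \<otimes> y \<in> H" using conj1[OF yc hi[OF k(1)]] .
    have "(y \<otimes> k \<otimes> y) \<otimes> (inv y \<otimes> inv k \<otimes> y) = y \<otimes> y"
      using kc yc by (simp add: m_assoc cancL)
    then have "y \<otimes> y \<in> H" using hm[OF A B] by simp
    then have "inv (y \<otimes> y) \<in> H" by (rule hi)
    moreover have "inv (y \<otimes> y) = x \<otimes> x" using xc y_def by (simp add: inv_mult_group)
    ultimately show False using nx by simp
  qed
  have allC: "y \<otimes> k \<in> C" if k: "k \<in> H" for k
  proof (rule ccontr)
    assume wn: "y \<otimes> k \<notin> C"
    define w where "w = y \<otimes> k"
    have kc: "k \<in> carrier G" using k hc by auto
    have wc: "w \<in> carrier G" using kc yc w_def by simp
    define v where "v = inv w"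
    have vc: "v \<in> carrier G" using wc v_def by simp
    obtain c1 where c1: "c1 \<in> C" "subgroup_sum_adj G H v c1" using code_ex[OF vc] by blast
    obtain h1 where h1: "h1 \<in> H" "h1 \<noteq> \<one>" "c1 = inv v \<otimes> h1" "c1 \<in> carrier G"
      using c1(2) by (rule adj_form)
    have h1c: "h1 \<in> carrier G" using h1 hc by auto
    have c1w: "c1 = w \<otimes> h1" using h1(3) wc v_def by simp
    have c1inv: "inv c1 \<in> carrier G" using h1(4) by simp
    obtain c2 where c2: "c2 \<in> C" "subgroup_sum_adj G H (inv c1) c2" using code_ex[OF c1inv] by blast
    obtain h2 where h2: "h2 \<in> H" "h2 \<noteq> \<one>" "c2 = inv (inv c1) \<otimes> h2" "c2 \<in> carrier G"
      using c2(2) by (rule adj_form)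
    have h2c: "h2 \<in> carrier G" using h2 hc by auto
    have c2e: "c2 = c1 \<otimes> h2" using h2(3) h1(4) by simp
    have c2y: "c2 = y \<otimes> (k \<otimes> h1 \<otimes> h2)" using c2e c1w w_def kc h1c h2c yc by (simp add: m_assoc)
    have khh: "k \<otimes> h1 \<otimes> h2 \<in> H" using hm[OF hm[OF k h1(1)] h2(1)] .
    have c2ne: "c2 \<noteq> w" using c2(1) wn w_def by blast
    have "inv v \<otimes> (h1 \<otimes> h2) = c2" using c2e c1w wc v_def h1c h2c by (simp add: m_assoc)
    moreover have "subgroup_sum_adj G H v (inv v \<otimes> (h1 \<otimes> h2))"
    proof (rule adj_intro[OF vc hm[OF h1(1) h2(1)]])
      show "h1 \<otimes> h2 \<noteq> \<one>"
      proof
        assume "h1 \<otimes> h2 = \<one>"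
        then have "inv v \<otimes> (h1 \<otimes> h2) = w" using wc v_def by simp
        then show False using c2ne \<open>inv v \<otimes> (h1 \<otimes> h2) = c2\<close> by simp
      qed
      show "inv v \<otimes> (h1 \<otimes> h2) \<noteq> v"
        using \<open>inv v \<otimes> (h1 \<otimes> h2) = c2\<close> c2y Lnv[OF k khh] v_def w_def by simp
    qed
    ultimately have "subgroup_sum_adj G H v c2" by simp
    then have "c2 = c1" using code_un[OF vc c2(1) c1(1)] c1(2) by blast
    then have "c1 \<otimes> h2 = c1 \<otimes> \<one>" using c2e h1(4) by simp
    then have "h2 = \<one>" using h2c one_closed h1(4) by (rule l_cancel)
    then show False using h2(2) by simp
  qed
  have fH: "finite H" using Hfin[OF fin] .
  have "2 \<le> card (H - {\<one>})" using c3 h1 fH by (simp add: card_Diff_singleton)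
  then obtain h1 h2 where hh: "h1 \<in> H - {\<one>}" "h2 \<in> H - {\<one>}" "h1 \<noteq> h2"
    using fH by (meson finite_Diff two_elems)
  have h1c: "h1 \<in> carrier G" "h2 \<in> carrier G" using hh hc by auto
  have adjx: "subgroup_sum_adj G H x (y \<otimes> h)" if h: "h \<in> H - {\<one>}" for h
  proof -
    have "subgroup_sum_adj G H x (inv x \<otimes> h)"
    proof (rule adj_intro[OF xc])
      show "h \<in> H" "h \<noteq> \<one>" using h by auto
      have "inv x \<otimes> h \<noteq> inv (inv x \<otimes> \<one>)" using Lnv[OF h1 \<open>h \<in> H\<close>] y_def by simp
      then show "inv x \<otimes> h \<noteq> x" using xc by simp
    qed
    then show ?thesis using y_def by simp
  qed
  have "y \<otimes> h1 = y \<otimes> h2"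
    using code_un[OF xc allC allC adjx[OF hh(1)] adjx[OF hh(2)]] hh by blast
  then have "h1 = h2" using h1c yc by (rule l_cancel)
  then show False using hh(3) by simp
qed

end



context codeloc begin

lemma H3:
  assumes fin: "finite (carrier G)" and c3: "3 \<le> card H"
  obtains a where "a \<in> H" "a \<in> carrier G" "H = {\<one>, a, inv a}" "a \<noteq> \<one>" "a \<noteq> inv a" "a \<otimes> a = inv a"
proof -
  have oc: "\<one> \<in> carrier G" by simp
  obtain a where a: "a \<in> C" "subgroup_sum_adj G H \<one> a" using code_ex[OF oc] by blast
  have aH: "a \<in> H" "a \<noteq> \<one>" "a \<in> carrier G" using a(2) by (auto simp: adj_iff)
  have uniqC: "d = a" if d: "d \<in> C" "d \<in> H" "d \<noteq> \<one>" for d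
  proof -
    have dc: "d \<in> carrier G" using d hc by auto
    have "subgroup_sum_adj G H \<one> d" using d dc by (simp add: adj_iff)
    then show ?thesis using code_un[OF oc d(1) a(1)] a(2) by blast
  qed
  obtain c where c: "c \<in> C" "subgroup_sum_adj G H a c" using code_ex[OF aH(3)] by blast
  obtain hh where hh: "hh \<in> H" "hh \<noteq> \<one>" "c = inv a \<otimes> hh" "c \<in> carrier G" "c \<noteq> a"
    using c(2) by (rule adj_form)
  have cH: "c \<in> H" using hh(3) hm[OF hi[OF aH(1)] hh(1)] by simp
  have c1: "c = \<one>"
  proof (rule ccontr)
    assume "c \<noteq> \<one>"
    then have "c = a" using uniqC c(1) cH by blast
    then show False using hh(5) by simp
  qed
  have oneC: "\<one> \<in> C" using c(1) c1 by simp
  have sub: "b = inv a" if b: "b \<in> H" "b \<noteq> \<one>" "b \<noteq> a" for b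
  proof (rule ccontr)
    assume nb: "b \<noteq> inv a"
    have bc: "b \<in> carrier G" using b hc by auto
    have ad1: "subgroup_sum_adj G H b \<one>" using b bc by (simp add: adj_iff)
    have ba: "b \<otimes> a \<noteq> \<one>"
    proof
      assume "b \<otimes> a = \<one>"
      then have "inv a = b" using aH(3) bc by (rule inv_equality)
      then show False using nb by simp
    qed
    have ad2: "subgroup_sum_adj G H b a" using b bc aH ba hm[OF b(1) aH(1)] by (simp add: adj_iff)
    have "\<one> = a" using code_un[OF bc oneC a(1) ad1 ad2] .
    then show False using aH(2) by simp
  qed
  have Hsub: "H \<subseteq> {\<one>, a, inv a}" using sub by blast
  have ia: "inv a \<in> H" using hi[OF aH(1)] .
  have ne: "a \<noteq> inv a"
  proof
    assume "a = inv a"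
    then have "H \<subseteq> {\<one>, a}" using Hsub by auto
    then have "card H \<le> card {\<one>, a}" by (rule card_mono[rotated]) simp
    also have "\<dots> \<le> 2" by (simp add: card_insert_if)
    finally show False using c3 by simp
  qed
  have Heq: "H = {\<one>, a, inv a}" using Hsub ia aH(1) h1 by blast
  have aa: "a \<otimes> a = inv a"
  proof -
    have "a \<otimes> a \<in> H" using hm[OF aH(1) aH(1)] .
    moreover have "a \<otimes> a \<noteq> a" using aH by simp
    moreover have "a \<otimes> a \<noteq> \<one>"
    proof
      assume "a \<otimes> a = \<one>"
      then have "inv a = a" using aH(3) aH(3) by (rule inv_equality)
      then show False using ne by simp
    qed
    ultimately show ?thesis using Heq by blast
  qed
  show ?thesis using that aH Heq ne aa by blast
qed

end


context codeloc begin

lemma K3: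
  assumes xc: "x \<in> carrier G" and fH: "finite H" and c3: "3 \<le> card H"
    and sq: "\<forall>h\<in>H. (x \<otimes> h) \<otimes> (x \<otimes> h) = \<one>"
  shows False
proof -
  define K where "K = (\<lambda>h. x \<otimes> h) ` H"
  have P1: "inv (x \<otimes> h) = x \<otimes> h" if h: "h \<in> H" for h
  proof -
    have hc': "h \<in> carrier G" using h hc by auto
    have "(x \<otimes> h) \<otimes> (x \<otimes> h) = \<one>" using sq h by blast
    then show ?thesis using xc hc' by (intro inv_equality) auto
  qed
  have P2: "c \<in> K" if k: "k \<in> K" and ad: "subgroup_sum_adj G H k c" for k c
  proof -
    obtain h where h: "h \<in> H" "k = x \<otimes> h" using k K_def by blast
    obtain hh where hh: "hh \<in> H" "c = inv k \<otimes> hh" using ad by (rule adj_form)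
    have hcs: "h \<in> carrier G" "hh \<in> carrier G" using h hh hc by auto
    have "c = x \<otimes> (h \<otimes> hh)" using hh(2) h(2) P1[OF h(1)] xc hcs by (simp add: m_assoc)
    moreover have "h \<otimes> hh \<in> H" using hm[OF h(1) hh(1)] .
    ultimately show ?thesis using K_def by blast
  qed
  have P3: "subgroup_sum_adj G H k k'" if k: "k \<in> K" "k' \<in> K" "k \<noteq> k'" for k k'
  proof -
    obtain h where h: "h \<in> H" "k = x \<otimes> h" using k K_def by blast
    obtain h' where h': "h' \<in> H" "k' = x \<otimes> h'" using k K_def by blast
    have hcs: "h \<in> carrier G" "h' \<in> carrier G" using h h' hc by auto
    have "k \<otimes> k' = inv (x \<otimes> h) \<otimes> (x \<otimes> h')" using P1[OF h(1)] h(2) h'(2) by simp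
    also have "\<dots> = inv h \<otimes> h'" using xc hcs by (simp add: inv_mult_group m_assoc cancL')
    finally have kk: "k \<otimes> k' = inv h \<otimes> h'" .
    have "inv h \<otimes> h' \<noteq> \<one>"
    proof
      assume "inv h \<otimes> h' = \<one>"
      then have "inv h' = inv h" using hcs by (intro inv_equality) auto
      then have "h' = h" using hcs by (metis inv_inv)
      then show False using k(3) h(2) h'(2) by simp
    qed
    moreover have "inv h \<otimes> h' \<in> H" using hm[OF hi[OF h(1)] h'(1)] .
    moreover have "k \<in> carrier G" "k' \<in> carrier G" using h h' xc hcs by auto
    ultimately show ?thesis using kk k(3) by (simp add: adj_iff)
  qed
  have inj: "inj_on (\<lambda>h. x \<otimes> h) H"
  proof (rule inj_onI)
    fix h h' assume "h \<in> H" "h' \<in> H" "x \<otimes> h = x \<otimes> h'"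
    then show "h = h'" using hc xc by (metis l_cancel)
  qed
  have cK: "card K = card H" unfolding K_def using inj by (rule card_image)
  have fK: "finite K" unfolding K_def using fH by simp
  have xK: "x \<in> K" unfolding K_def using h1 xc by force
  have Kc: "K \<subseteq> carrier G" unfolding K_def using xc hc by auto
  obtain c1 where c1: "c1 \<in> C" "subgroup_sum_adj G H x c1" using code_ex[OF xc] by blast
  have c1K: "c1 \<in> K" using P2[OF xK c1(2)] .
  have c1x: "c1 \<noteq> x" using c1(2) by (simp add: adj_iff)
  have c1c: "c1 \<in> carrier G" using c1K Kc by blast
  obtain c2 where c2: "c2 \<in> C" "subgroup_sum_adj G H c1 c2" using code_ex[OF c1c] by blast
  have c2K: "c2 \<in> K" using P2[OF c1K c2(2)] .
  have c21: "c2 \<noteq> c1" using c2(2) by (simp add: adj_iff)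
  have c2x: "c2 = x"
  proof (rule ccontr)
    assume "c2 \<noteq> x"
    then have "subgroup_sum_adj G H x c2" using P3[OF xK c2K] by blast
    then have "c2 = c1" using code_un[OF xc c2(1) c1(1)] c1(2) by blast
    then show False using c21 by simp
  qed
  have "card (K - {x, c1}) \<ge> 1"
  proof -
    have "card (K - {x, c1}) = card K - card {x, c1}" using xK c1K fK by (intro card_Diff_subset) auto
    moreover have "card {x, c1} = 2" using c1x by simp
    ultimately show ?thesis using cK c3 by simp
  qed
  then obtain c3 where c3: "c3 \<in> K" "c3 \<noteq> x" "c3 \<noteq> c1"
    by (metis Diff_iff card.empty equals0I insertCI not_one_le_zero)
  have c3c: "c3 \<in> carrier G" using c3 Kc by blast
  have a1: "subgroup_sum_adj G H c3 x" using P3[OF c3(1) xK] c3 by blast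
  have a2: "subgroup_sum_adj G H c3 c1" using P3[OF c3(1) c1K] c3 by blast
  have "x = c1" using code_un[OF c3c _ c1(1) a1 a2] c2(1) c2x by blast
  then show False using c1x by simp
qed

lemma central:
  assumes fin: "finite (carrier G)" and c3: "3 \<le> card H"
    and a: "a \<in> carrier G" "H = {\<one>, a, inv a}" "a \<noteq> \<one>" "a \<noteq> inv a" "a \<otimes> a = inv a"
    and xc: "x \<in> carrier G"
  shows "x \<otimes> a = a \<otimes> x"
proof -
  define t where "t = x \<otimes> a \<otimes> inv x"
  have aH: "a \<in> H" using a(2) by blast
  have tH: "t \<in> H" unfolding t_def using conj2[OF xc aH] .
  have t1: "t \<noteq> \<one>"
  proof
    assume "t = \<one>"
    then have "x \<otimes> a \<otimes> inv x = \<one>" unfolding t_def .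
    then have "x \<otimes> a = x" using xc a(1) by (metis inv_closed inv_inv m_closed inv_equality inv_comm)
    then show False using xc a(1) a(3) by simp
  qed
  have comm_of_t: "x \<otimes> a = a \<otimes> x" if "t = a"
  proof -
    have "x \<otimes> a = (x \<otimes> a \<otimes> inv x) \<otimes> x" using xc a(1) by (simp add: m_assoc)
    also have "\<dots> = a \<otimes> x" using that unfolding t_def by simp
    finally show ?thesis .
  qed
  show ?thesis
  proof (cases "t = a")
    case True then show ?thesis by (rule comm_of_t)
  next
    case False
    then have ti: "t = inv a" using tH t1 a(2) by blast
    have sH: "x \<otimes> x \<in> H" using sq_in_H[OF fin c3 xc] .
    have s1: "x \<otimes> x = \<one>"
    proof (rule ccontr)
      assume s1: "x \<otimes> x \<noteq> \<one>"
      then have "x \<otimes> x = a \<or> x \<otimes> x = inv a" using sH a(2) by blast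
      then have "x \<otimes> a = a \<otimes> x"
      proof
        assume "x \<otimes> x = a"
        then show ?thesis using xc by (metis m_assoc)
      next
        assume e: "x \<otimes> x = inv a"
        then have "a = inv (x \<otimes> x)" using a(1) by simp
        also have "\<dots> = inv x \<otimes> inv x" using xc by (simp add: inv_mult_group)
        finally have "a = inv x \<otimes> inv x" .
        then show ?thesis using xc by (simp add: m_assoc cancL cancL')
      qed
      then have "t = a" unfolding t_def using xc a(1) by (simp add: m_assoc)
      then show False using False by simp
    qed
    have ix: "inv x = x" using s1 xc by (intro inv_equality) auto
    have sq: "\<forall>h\<in>H. (x \<otimes> h) \<otimes> (x \<otimes> h) = \<one>"
    proof
      fix h assume "h \<in> H"
      then have "h = \<one> \<or> h = a \<or> h = inv a" using a(2) by blast
      then show "(x \<otimes> h) \<otimes> (x \<otimes> h) = \<one>"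
      proof (elim disjE)
        assume "h = \<one>" then show ?thesis using xc s1 by simp
      next
        assume h: "h = a"
        have "x \<otimes> a \<otimes> x = inv a" using ti ix unfolding t_def by simp
        then have "(x \<otimes> a) \<otimes> (x \<otimes> a) = inv a \<otimes> a" using xc a(1) by (simp add: m_assoc[symmetric])
        then show ?thesis using h a(1) by simp
      next
        assume h: "h = inv a"
        have "x \<otimes> a \<otimes> x = inv a" using ti ix unfolding t_def by simp
        then have "inv (x \<otimes> a \<otimes> x) = a" using a(1) by simp
        then have "x \<otimes> inv a \<otimes> x = a" using xc a(1) ix by (simp add: inv_mult_group m_assoc)
        then have "(x \<otimes> inv a) \<otimes> (x \<otimes> inv a) = a \<otimes> inv a" using xc a(1) by (simp add: m_assoc[symmetric])
        then show ?thesis using h a(1) by simp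
      qed
    qed
    show ?thesis using K3[OF xc Hfin[OF fin] c3 sq] by blast
  qed
qed

end


context codeloc begin

lemma struct:
  assumes fin: "finite (carrier G)" and c2: "card H \<noteq> 2"
  obtains a where "a \<in> carrier G" "H = {\<one>, a, inv a}" "a \<noteq> \<one>" "a \<noteq> inv a" "a \<otimes> a = inv a"
    "comm_group G" "\<forall>g\<in>carrier G. g \<otimes> g \<in> H"
proof -
  have fH: "finite H" using Hfin[OF fin] .
  have "card H \<noteq> 0" using fH h1 by auto
  moreover have "card H \<noteq> 1"
  proof
    assume "card H = 1"
    then obtain t where t: "H = {t}" by (rule card_1_singletonE)
    then have Ht: "H = {\<one>}" using h1 by simp
    obtain c where c: "c \<in> C" "subgroup_sum_adj G H \<one> c" using code_ex[OF one_closed] by blast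
    have "\<one> \<otimes> c \<in> H - {\<one>}" using c(2) by (rule adj_H)
    then show False unfolding Ht by simp
  qed
  ultimately have c3: "3 \<le> card H" using c2 by linarith
  obtain a where a: "a \<in> H" "a \<in> carrier G" "H = {\<one>, a, inv a}" "a \<noteq> \<one>" "a \<noteq> inv a" "a \<otimes> a = inv a"
    using H3[OF fin c3] by blast
  have sq: "\<forall>g\<in>carrier G. g \<otimes> g \<in> H" using sq_in_H[OF fin c3] by blast
  have cent_a: "x \<otimes> a = a \<otimes> x" if "x \<in> carrier G" for x
    using central[OF fin c3 a(2-6) that] .
  have cent: "x \<otimes> h = h \<otimes> x" if x: "x \<in> carrier G" and h: "h \<in> H" for x h
  proof -
    have "h = \<one> \<or> h = a \<or> h = inv a" using h a(3) by blast
    then show ?thesis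
    proof (elim disjE)
      assume "h = \<one>" then show ?thesis using x by simp
    next
      assume "h = a" then show ?thesis using cent_a[OF x] by simp
    next
      assume hh: "h = inv a"
      have "x \<otimes> inv a = inv a \<otimes> (a \<otimes> x) \<otimes> inv a" using x a(2) by (simp add: m_assoc cancL')
      also have "\<dots> = inv a \<otimes> (x \<otimes> a) \<otimes> inv a" using cent_a[OF x] by simp
      also have "\<dots> = inv a \<otimes> x" using x a(2) by (simp add: m_assoc)
      finally show ?thesis using hh by simp
    qed
  qed
  have iaa: "inv a \<otimes> inv a = a"
  proof -
    have "inv a \<otimes> inv a = inv (a \<otimes> a)" using a(2) by (simp add: inv_mult_group)
    then show ?thesis using a(6) a(2) by simp
  qed
  have hsq1: "h = \<one>" if h: "h \<in> H" and hh: "h \<otimes> h = \<one>" for h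
  proof -
    have "h = \<one> \<or> h = a \<or> h = inv a" using h a(3) by blast
    then show ?thesis
    proof (elim disjE)
      assume "h = a" then show ?thesis using hh a(6) a(2) a(4) a(5) by simp
    next
      assume "h = inv a" then show ?thesis using hh iaa a(4) by simp
    qed simp
  qed
  have cube: "h \<otimes> h \<otimes> h = \<one>" if h: "h \<in> H" for h
  proof -
    have "h = \<one> \<or> h = a \<or> h = inv a" using h a(3) by blast
    then show ?thesis
    proof (elim disjE)
      assume "h = a" then show ?thesis using a(6) a(2) by simp
    next
      assume "h = inv a" then show ?thesis using iaa a(2) by simp
    qed simp
  qed
  have Ecomm: "u \<otimes> v = v \<otimes> u" if u: "u \<in> carrier G" "u \<otimes> u = \<one>" and v: "v \<in> carrier G" "v \<otimes> v = \<one>" for u v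
  proof -
    define c where "c = (u \<otimes> v) \<otimes> (u \<otimes> v)"
    have cH: "c \<in> H" unfolding c_def using sq u v by simp
    have cc: "c \<in> carrier G" using cH hc by blast
    have uu: "u \<otimes> (u \<otimes> z) = z" if "z \<in> carrier G" for z using u that by (simp add: m_assoc[symmetric])
    have vv: "v \<otimes> (v \<otimes> z) = z" if "z \<in> carrier G" for z using v that by (simp add: m_assoc[symmetric])
    have "u \<otimes> c \<otimes> u = c" using cent[OF u(1) cH] u cc by (simp add: m_assoc)
    then have "c \<otimes> c = c \<otimes> (u \<otimes> c \<otimes> u)" by simp
    also have "\<dots> = \<one>" unfolding c_def using u v by (simp add: m_assoc uu vv)
    finally have "c = \<one>" using hsq1[OF cH] by blast
    then have "(u \<otimes> v) \<otimes> (u \<otimes> v) = \<one>" unfolding c_def .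
    then have "inv (u \<otimes> v) = u \<otimes> v" using u v by (intro inv_equality) auto
    moreover have "inv (u \<otimes> v) = v \<otimes> u"
    proof -
      have "inv u = u" "inv v = v" using u v by (auto intro: inv_equality)
      then show ?thesis using u v by (simp add: inv_mult_group)
    qed
    ultimately show ?thesis by simp
  qed
  have dec: "x = inv (x \<otimes> x) \<otimes> (x \<otimes> x \<otimes> x)" if x: "x \<in> carrier G" for x
    using x by (simp add: cancL')
  have decE: "(x \<otimes> x \<otimes> x) \<otimes> (x \<otimes> x \<otimes> x) = \<one>" if x: "x \<in> carrier G" for x
  proof -
    have "(x \<otimes> x \<otimes> x) \<otimes> (x \<otimes> x \<otimes> x) = (x \<otimes> x) \<otimes> (x \<otimes> x) \<otimes> (x \<otimes> x)" using x by (simp add: m_assoc)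
    then show ?thesis using cube sq x by simp
  qed
  have comm: "x \<otimes> y = y \<otimes> x" if x: "x \<in> carrier G" and y: "y \<in> carrier G" for x y
  proof -
    define hx ux hy uy where "hx = inv (x \<otimes> x)" "ux = x \<otimes> x \<otimes> x" "hy = inv (y \<otimes> y)" "uy = y \<otimes> y \<otimes> y"
    have hxH: "hx \<in> H" "hy \<in> H" unfolding hx_ux_hy_uy_def using sq x y hi by auto
    have hcs: "hx \<in> carrier G" "hy \<in> carrier G" using hxH hc by auto
    have ucs: "ux \<in> carrier G" "uy \<in> carrier G" unfolding hx_ux_hy_uy_def using x y by auto
    have uu: "ux \<otimes> ux = \<one>" "uy \<otimes> uy = \<one>" unfolding hx_ux_hy_uy_def using decE x y by auto
    have xd: "x = hx \<otimes> ux" "y = hy \<otimes> uy" unfolding hx_ux_hy_uy_def using dec x y by auto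
    have "x \<otimes> y = hx \<otimes> (ux \<otimes> hy) \<otimes> uy" unfolding xd using hcs ucs by (simp add: m_assoc)
    also have "\<dots> = hx \<otimes> (hy \<otimes> ux) \<otimes> uy" using cent[OF ucs(1) hxH(2)] by simp
    also have "\<dots> = (hx \<otimes> hy) \<otimes> (ux \<otimes> uy)" using hcs ucs by (simp add: m_assoc)
    also have "\<dots> = (hy \<otimes> hx) \<otimes> (uy \<otimes> ux)" using cent[OF hcs(2) hxH(1)] Ecomm[OF ucs(1) uu(1) ucs(2) uu(2)] by simp
    also have "\<dots> = hy \<otimes> (uy \<otimes> hx) \<otimes> ux" using cent[OF ucs(2) hxH(1)] hcs ucs by (simp add: m_assoc)
    also have "\<dots> = y \<otimes> x" unfolding xd using hcs ucs by (simp add: m_assoc)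
    finally show ?thesis .
  qed
  have "comm_group G" using comm by (rule group_comm_groupI)
  then show ?thesis using that a sq by blast
qed

end


definition ap3 :: "('a,'b) monoid_scheme \<Rightarrow> 'a \<Rightarrow> int \<Rightarrow> 'a" where
  "ap3 G a z = (if z = 0 then \<one>\<^bsub>G\<^esub> else if z = 1 then a else inv\<^bsub>G\<^esub> a)"

context comm_group begin

lemma build_iso:
  assumes fin: "finite (carrier G)"
    and a: "a \<in> carrier G" "H = {\<one>, a, inv a}" "a \<noteq> \<one>" "a \<noteq> inv a" "a \<otimes> a = inv a"
    and sq: "\<forall>g\<in>carrier G. g \<otimes> g \<in> H"
  shows "\<exists>n \<phi>. \<phi> \<in> iso G (Z2n_Z3 n) \<and> \<phi> ` H = {\<one>\<^bsub>P2 n\<^esub>} \<times> carrier (integer_mod_group 3)"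
proof -
  have iaa: "inv a \<otimes> inv a = a"
  proof -
    have "inv a \<otimes> inv a = inv (a \<otimes> a)" using a(1) by (simp add: inv_mult_group)
    then show ?thesis using a(5) a(1) by simp
  qed
  have ia1: "inv a \<noteq> \<one>" using a(1) a(3) by simp
  have Hc: "H \<subseteq> carrier G" using a(1,2) by auto
  have Hm: "h \<otimes> h' \<in> H" if "h \<in> H" "h' \<in> H" for h h'
    using that a(1,2,5) iaa by (auto simp: m_comm)
  have Hi: "inv h \<in> H" if "h \<in> H" for h
    using that a(1,2) by auto
  have hsq1: "h = \<one>" if h: "h \<in> H" and hh: "h \<otimes> h = \<one>" for h
  proof -
    have "h = \<one> \<or> h = a \<or> h = inv a" using h a(2) by blast
    then show ?thesis
    proof (elim disjE)
      assume "h = a" then show ?thesis using hh a(5) ia1 by simp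
    next
      assume "h = inv a" then show ?thesis using hh iaa a(3) by simp
    qed simp
  qed
  have cube: "h \<otimes> h \<otimes> h = \<one>" if h: "h \<in> H" for h
  proof -
    have "h = \<one> \<or> h = a \<or> h = inv a" using h a(2) by blast
    then show ?thesis
    proof (elim disjE)
      assume "h = a" then show ?thesis using a(5) a(1) by simp
    next
      assume "h = inv a" then show ?thesis using iaa a(1) by simp
    qed simp
  qed
  obtain n b where bE: "\<forall>i<n. b i \<in> Eset G" and bij: "bij_betw (bprod G n b) (carrier (P2 n)) (Eset G)"
    using basis_exists[OF fin] by blast
  define \<beta> where "\<beta> = bprod G n b"
  have \<beta>E: "\<beta> p \<in> Eset G" if "p \<in> carrier (P2 n)" for p using bprod_E[OF bE that] \<beta>_def by simp
  have \<beta>c: "\<beta> p \<in> carrier G" if "p \<in> carrier (P2 n)" for p using \<beta>E[OF that] by (simp add: Eset_def)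
  have \<beta>m: "\<beta> (p \<otimes>\<^bsub>P2 n\<^esub> q) = \<beta> p \<otimes> \<beta> q" if "p \<in> carrier (P2 n)" "q \<in> carrier (P2 n)" for p q
    using bprod_mult[OF bE that] \<beta>_def by simp
  have \<beta>inj: "inj_on \<beta> (carrier (P2 n))" using bij \<beta>_def by (simp add: bij_betw_def)
  have \<beta>surj: "\<beta> ` carrier (P2 n) = Eset G" using bij \<beta>_def by (simp add: bij_betw_def)
  have \<beta>1: "\<beta> \<one>\<^bsub>P2 n\<^esub> = \<one>" unfolding \<beta>_def by (rule bprod_one)
  have apc: "ap3 G a z \<in> carrier G" for z using a(1) by (simp add: ap3_def)
  have apH: "ap3 G a ` {0,1,2} = H" using a(2) by (auto simp: ap3_def)
  have apm: "ap3 G a ((z + w) mod 3) = ap3 G a z \<otimes> ap3 G a w" if "z \<in> {0,1,2}" "w \<in> {0,1,2}" for z w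
    using that a(1) a(5) iaa by (auto simp: ap3_def)
  have apinj: "z = w" if "z \<in> {0,1,2}" "w \<in> {0,1,2}" "ap3 G a z = ap3 G a w" for z w
    using that a(3) a(4) ia1 by (auto simp: ap3_def)
  have duniq: "u = u' \<and> h = h'" if u: "u \<in> Eset G" "u' \<in> Eset G" and h: "h \<in> H" "h' \<in> H"
    and eq: "u \<otimes> h = u' \<otimes> h'" for u u' h h'
  proof -
    have uc: "u \<in> carrier G" "u' \<in> carrier G" "u \<otimes> u = \<one>" "u' \<otimes> u' = \<one>" using u by (auto simp: Eset_def)
    have hcs: "h \<in> carrier G" "h' \<in> carrier G" using h Hc by auto
    define d where "d = h \<otimes> inv h'"
    have dH: "d \<in> H" unfolding d_def using Hm[OF h(1) Hi[OF h(2)]] .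
    have dc: "d \<in> carrier G" using dH Hc by auto
    have "u' = u \<otimes> h \<otimes> inv h'" using eq uc hcs by (simp add: m_assoc)
    then have u'd: "u' = u \<otimes> d" unfolding d_def using uc hcs by (simp add: m_assoc)
    have "\<one> = (u \<otimes> d) \<otimes> (u \<otimes> d)" using uc(4) u'd by simp
    also have "\<dots> = (u \<otimes> u) \<otimes> (d \<otimes> d)" using uc dc by (simp add: m_ac)
    also have "\<dots> = d \<otimes> d" using uc dc by simp
    finally have "d = \<one>" using hsq1[OF dH] by simp
    then have "h = h'" unfolding d_def using hcs by (metis inv_closed inv_inv inv_equality)
    then show ?thesis using u'd \<open>d = \<one>\<close> uc by simp
  qed
  define \<Phi> where "\<Phi> x = \<beta> (fst x) \<otimes> ap3 G a (snd x)" for x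
  have Zc: "carrier (Z2n_Z3 n) = carrier (P2 n) \<times> {0,1,2}" by (simp add: Z2n_Z3_def carrier_Z)
  have Zm: "(p, z) \<otimes>\<^bsub>Z2n_Z3 n\<^esub> (q, w) = (p \<otimes>\<^bsub>P2 n\<^esub> q, (z + w) mod 3)" for p z q w
    by (simp add: Z2n_Z3_def)
  have hom: "\<Phi> \<in> hom (Z2n_Z3 n) G"
  proof (rule homI)
    fix x assume "x \<in> carrier (Z2n_Z3 n)"
    then show "\<Phi> x \<in> carrier G" unfolding \<Phi>_def Zc using \<beta>c apc by auto
  next
    fix x y assume x: "x \<in> carrier (Z2n_Z3 n)" and y: "y \<in> carrier (Z2n_Z3 n)"
    obtain p z where xz: "x = (p, z)" by force
    obtain q w where yw: "y = (q, w)" by force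
    have pz: "p \<in> carrier (P2 n)" "z \<in> {0,1,2}" using x xz Zc by auto
    have qw: "q \<in> carrier (P2 n)" "w \<in> {0,1,2}" using y yw Zc by auto
    have "\<Phi> (x \<otimes>\<^bsub>Z2n_Z3 n\<^esub> y) = \<beta> (p \<otimes>\<^bsub>P2 n\<^esub> q) \<otimes> ap3 G a ((z + w) mod 3)"
      unfolding xz yw Zm \<Phi>_def by simp
    also have "\<dots> = (\<beta> p \<otimes> \<beta> q) \<otimes> (ap3 G a z \<otimes> ap3 G a w)"
      using \<beta>m[OF pz(1) qw(1)] apm[OF pz(2) qw(2)] by simp
    also have "\<dots> = (\<beta> p \<otimes> ap3 G a z) \<otimes> (\<beta> q \<otimes> ap3 G a w)"
      using \<beta>c[OF pz(1)] \<beta>c[OF qw(1)] apc by (simp add: m_ac)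
    also have "\<dots> = \<Phi> x \<otimes> \<Phi> y" unfolding xz yw \<Phi>_def by simp
    finally show "\<Phi> (x \<otimes>\<^bsub>Z2n_Z3 n\<^esub> y) = \<Phi> x \<otimes> \<Phi> y" .
  qed
  have inj: "inj_on \<Phi> (carrier (Z2n_Z3 n))"
  proof (rule inj_onI)
    fix x y assume x: "x \<in> carrier (Z2n_Z3 n)" and y: "y \<in> carrier (Z2n_Z3 n)" and eq: "\<Phi> x = \<Phi> y"
    obtain p z where xz: "x = (p, z)" by force
    obtain q w where yw: "y = (q, w)" by force
    have pz: "p \<in> carrier (P2 n)" "z \<in> {0,1,2}" using x xz Zc by auto
    have qw: "q \<in> carrier (P2 n)" "w \<in> {0,1,2}" using y yw Zc by auto
    have e: "\<beta> p \<otimes> ap3 G a z = \<beta> q \<otimes> ap3 G a w" using eq unfolding xz yw \<Phi>_def by simp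
    have aHz: "ap3 G a z \<in> H" using apH pz(2) by blast
    have aHw: "ap3 G a w \<in> H" using apH qw(2) by blast
    have both: "\<beta> p = \<beta> q \<and> ap3 G a z = ap3 G a w" by (rule duniq[OF \<beta>E[OF pz(1)] \<beta>E[OF qw(1)] aHz aHw e])
    have "p = q" using inj_onD[OF \<beta>inj conjunct1[OF both] pz(1) qw(1)] .
    moreover have "z = w" using apinj[OF pz(2) qw(2) conjunct2[OF both]] .
    ultimately have "p = q" "z = w" by simp_all
    then show "x = y" using xz yw by simp
  qed
  have surj: "\<Phi> ` carrier (Z2n_Z3 n) = carrier G"
  proof
    show "\<Phi> ` carrier (Z2n_Z3 n) \<subseteq> carrier G" using hom by (auto simp: hom_def)
  next
    show "carrier G \<subseteq> \<Phi> ` carrier (Z2n_Z3 n)"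
    proof
      fix g assume g: "g \<in> carrier G"
      define u where "u = g \<otimes> g \<otimes> g"
      define h where "h = inv (g \<otimes> g)"
      have hH: "h \<in> H" unfolding h_def using Hi sq g by blast
      have uE: "u \<in> Eset G"
      proof -
        have "u \<otimes> u = (g \<otimes> g) \<otimes> (g \<otimes> g) \<otimes> (g \<otimes> g)" unfolding u_def using g by (simp add: m_ac)
        also have "\<dots> = \<one>" using cube sq g by blast
        finally show ?thesis unfolding Eset_def u_def using g by simp
      qed
      have hcc: "h \<in> carrier G" using hH Hc by blast
      have ucc: "u \<in> carrier G" using g u_def by simp
      have "u \<otimes> h = h \<otimes> u" using ucc hcc by (rule m_comm)
      also have "h \<otimes> u = g" unfolding u_def h_def using g by (simp add: cancL')
      finally have gd: "g = u \<otimes> h" by simp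
      have "u \<in> \<beta> ` carrier (P2 n)" using uE \<beta>surj by simp
      then obtain p where p: "p \<in> carrier (P2 n)" "\<beta> p = u" by (rule imageE) simp
      have "h \<in> ap3 G a ` {0,1,2}" using hH apH by simp
      then obtain z where z: "z \<in> {0,1,2}" "ap3 G a z = h" by (rule imageE) simp
      have "\<Phi> (p, z) = g" unfolding \<Phi>_def using p z gd by simp
      moreover have "(p, z) \<in> carrier (Z2n_Z3 n)" using p z Zc by simp
      ultimately show "g \<in> \<Phi> ` carrier (Z2n_Z3 n)" by (metis image_eqI)
    qed
  qed
  have iso: "\<Phi> \<in> iso (Z2n_Z3 n) G" unfolding iso_def bij_betw_def using hom inj surj by simp
  have grpZ: "group (Z2n_Z3 n)" unfolding Z2n_Z3_def by (intro DirProd_group P2_group group_integer_mod_group)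
  define \<phi> where "\<phi> = inv_into (carrier (Z2n_Z3 n)) \<Phi>"
  have isoinv: "\<phi> \<in> iso G (Z2n_Z3 n)" unfolding \<phi>_def using group.iso_set_sym[OF grpZ iso] .
  have HS: "\<Phi> ` ({\<one>\<^bsub>P2 n\<^esub>} \<times> {0,1,2}) = H"
  proof -
    have "\<Phi> ` ({\<one>\<^bsub>P2 n\<^esub>} \<times> {0,1,2}) = ap3 G a ` {0,1,2}"
      unfolding \<Phi>_def using \<beta>1 apc by (auto simp: image_iff)
    then show ?thesis using apH by simp
  qed
  have sub: "{\<one>\<^bsub>P2 n\<^esub>} \<times> {0,1,2} \<subseteq> carrier (Z2n_Z3 n)"
    using Zc monoid.one_closed[OF group.is_monoid[OF P2_group]] by auto
  have "\<phi> ` H = {\<one>\<^bsub>P2 n\<^esub>} \<times> {0,1,2}"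
    unfolding \<phi>_def HS[symmetric] using inj sub by (rule inv_into_image_cancel)
  then have "\<phi> ` H = {\<one>\<^bsub>P2 n\<^esub>} \<times> carrier (integer_mod_group 3)" by (simp add: carrier_Z)
  then show ?thesis using isoinv by blast
qed

end


theorem theorem5p2:
  fixes G :: "('a, 'b) monoid_scheme" and H :: "'a set"
  assumes "group G" and "finite (carrier G)" and "H \<lhd> G"
  shows "(\<exists>C. subgroup_sum_total_perfect_code G H C) \<longleftrightarrow>
    ((card H = 2 \<and>
      (\<forall>x \<in> carrier G - H. x \<otimes>\<^bsub>G\<^esub> x \<in> H \<longrightarrow> involution G x))
     \<or>
     (\<exists>(n::nat) \<phi>. \<phi> \<in> iso G (Z2n_Z3 n) \<and>
        \<phi> ` H = {\<one>\<^bsub>product_group {..<n} (\<lambda>_. integer_mod_group 2)\<^esub>} \<times> carrier (integer_mod_group 3)))"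
proof
  assume "\<exists>C. subgroup_sum_total_perfect_code G H C"
  then obtain C where code: "subgroup_sum_total_perfect_code G H C" by blast
  interpret cl: codeloc G H C
    by (rule codeloc.intro[OF assms(1)], rule codeloc_axioms.intro[OF assms(3) code])
  show "(card H = 2 \<and> (\<forall>x \<in> carrier G - H. x \<otimes>\<^bsub>G\<^esub> x \<in> H \<longrightarrow> involution G x)) \<or>
     (\<exists>(n::nat) \<phi>. \<phi> \<in> iso G (Z2n_Z3 n) \<and>
        \<phi> ` H = {\<one>\<^bsub>product_group {..<n} (\<lambda>_. integer_mod_group 2)\<^esub>} \<times> carrier (integer_mod_group 3))"
  proof (cases "card H = 2")
    case True
    then show ?thesis using cl.card2_nec by blast
  next
    case False
    obtain a where a: "a \<in> carrier G" "H = {\<one>\<^bsub>G\<^esub>, a, inv\<^bsub>G\<^esub> a}" "a \<noteq> \<one>\<^bsub>G\<^esub>" "a \<noteq> inv\<^bsub>G\<^esub> a"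
      "a \<otimes>\<^bsub>G\<^esub> a = inv\<^bsub>G\<^esub> a" "comm_group G" "\<forall>g\<in>carrier G. g \<otimes>\<^bsub>G\<^esub> g \<in> H"
      using cl.struct[OF assms(2) False] by blast
    have "\<exists>n \<phi>. \<phi> \<in> iso G (Z2n_Z3 n) \<and> \<phi> ` H = {\<one>\<^bsub>P2 n\<^esub>} \<times> carrier (integer_mod_group 3)"
      using comm_group.build_iso[OF a(6) assms(2) a(1-5) a(7)] .
    then show ?thesis by blast
  qed
next
  assume R: "(card H = 2 \<and> (\<forall>x \<in> carrier G - H. x \<otimes>\<^bsub>G\<^esub> x \<in> H \<longrightarrow> involution G x)) \<or>
     (\<exists>(n::nat) \<phi>. \<phi> \<in> iso G (Z2n_Z3 n) \<and>
        \<phi> ` H = {\<one>\<^bsub>product_group {..<n} (\<lambda>_. integer_mod_group 2)\<^esub>} \<times> carrier (integer_mod_group 3))"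
  show "\<exists>C. subgroup_sum_total_perfect_code G H C"
  proof (cases "card H = 2 \<and> (\<forall>x \<in> carrier G - H. x \<otimes>\<^bsub>G\<^esub> x \<in> H \<longrightarrow> involution G x)")
    case True
    then have "subgroup_sum_total_perfect_code G H (carrier G)"
      using group.code_card2[OF assms(1) assms(3)] by blast
    then show ?thesis by blast
  next
    case False
    then obtain n \<phi> where phi: "\<phi> \<in> iso G (Z2n_Z3 n)"
      and img: "\<phi> ` H = {\<one>\<^bsub>P2 n\<^esub>} \<times> carrier (integer_mod_group 3)" using R by blast
    have grpZ: "group (Z2n_Z3 n)" unfolding Z2n_Z3_def by (intro DirProd_group P2_group group_integer_mod_group)
    have HG: "H \<subseteq> carrier G" using normal_imp_subgroup[OF assms(3)] by (rule subgroup.subset)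
    have cz: "subgroup_sum_total_perfect_code (Z2n_Z3 n) (\<phi> ` H) (carrier (P2 n) \<times> {0,1})"
      unfolding img by (rule code_Z)
    show ?thesis using code_iso_transfer[OF assms(1) grpZ phi HG cz] by blast
  qed
qed


end
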